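(* Let $\mathcal{C} \subseteq \mathbb{R}^n$ be a nonempty closed convex set, let $\theta^* \in \mathbb{R}^n$ (not necessarily in $\mathcal{C}$), let $Z$ be a random vector in $\mathbb{R}^n$ with $\mathbb{E} Z = 0$ and $\mathbb{E}\|Z\|^2 < \infty$, and for $\sigma > 0$ let $Y = \theta^* + \sigma Z$ and $\hat\theta(Y) = \Pi_{\mathcal{C}}(Y)$. Suppose the following "locally polyhedral" condition holds: $T_{\mathcal{C}}(\Pi_{\mathcal{C}}(\theta^* ))$ is a polyhedral cone, and there exists $r^* > 0$ such that $$T_{\mathcal{C}}(\Pi_{\mathcal{C}}(\theta^* )) \cap B_{r^*}(0) = F_{\mathcal{C}}(\Pi_{\mathcal{C}}(\theta^* )) \cap B_{r^*}(0).$$ Then $$\lim_{\sigma \downarrow 0} \frac{1}{\sigma^2} M(\hat\theta,\theta^* ) = \lim_{\sigma \downarrow 0} \frac{1}{\sigma^2} E(\hat\theta,\theta^* ) = \delta\big(T_{\mathcal{C}}(\Pi_{\mathcal{C}}(\theta^* )) \cap (\theta^* - \Pi_{\mathcal{C}}(\theta^* ))^\perp\big).$$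
   Context: $\|\cdot\|$ is the Euclidean norm and $\Pi_{\mathcal{C}}(x) = \arg\min_{\theta \in \mathcal{C}} \|x - \theta\|^2$ is the Euclidean projection onto a closed convex set. $B_r(x) = \{u : \|u - x\| \le r\}$. For $v \in \mathbb{R}^n$, $v^\perp = \{u : \langle u, v\rangle = 0\}$. For $\theta_0 \in \mathcal{C}$: $F_{\mathcal{C}}(\theta_0) = \{\theta - \theta_0 : \theta \in \mathcal{C}\}$, and the tangent cone is $T_{\mathcal{C}}(\theta_0) = \mathrm{cl}\{\alpha(\theta - \theta_0) : \alpha \ge 0, \theta \in \mathcal{C}\}$. A polyhedral cone is a set $\{x : Ax \le 0\}$ for a matrix $A$. The misspecified risk is $M(\hat\theta,\theta^* ) = \mathbb{E}\|\hat\theta(Y) - \Pi_{\mathcal{C}}(\theta^* )\|^2$ and the excess risk is $E(\hat\theta,\theta^* ) = \mathbb{E}\|\hat\theta(Y) - \theta^*\|^2 - \|\Pi_{\mathcal{C}}(\theta^* ) - \theta^*\|^2$, with expectations over $Z$. For a closed convex cone $T$, the (generalized) statistical dimension is $\delta(T) = \mathbb{E}\|\Pi_T(Z)\|^2$, the expectation being with respect to the distribution of $Z$. *)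

theory Defs
  imports "HOL-Probability.Probability"
begin

abbreviation proj :: "('a::euclidean_space) set \<Rightarrow> 'a \<Rightarrow> 'a" where
  "proj S x \<equiv> closest_point S x"

definition feasible_dirs :: "('a::euclidean_space) set \<Rightarrow> 'a \<Rightarrow> 'a set" where
  "feasible_dirs C t0 = {t - t0 | t. t \<in> C}"

definition tangent_cone :: "('a::euclidean_space) set \<Rightarrow> 'a \<Rightarrow> 'a set" where
  "tangent_cone C t0 = closure {a *\<^sub>R (t - t0) | a t. a \<ge> 0 \<and> t \<in> C}"

text \<open>Polyhedral cone {x. A x \<le> 0}: the rows of the matrix A form a finite list of vectors.\<close>
definition polyhedral_cone :: "('a::euclidean_space) set \<Rightarrow> bool" where
  "polyhedral_cone K \<longleftrightarrow> (\<exists>rows :: 'a list. K = {x. \<forall>a\<in>set rows. inner a x \<le> 0})"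

definition orth :: "('a::euclidean_space) \<Rightarrow> 'a set" where
  "orth v = {u. inner u v = 0}"

definition stat_dim :: "'b measure \<Rightarrow> ('b \<Rightarrow> 'a::euclidean_space) \<Rightarrow> 'a set \<Rightarrow> real" where
  "stat_dim M Z T = (\<integral>\<omega>. (norm (proj T (Z \<omega>)))\<^sup>2 \<partial>M)"

definition misspec_risk :: "'b measure \<Rightarrow> ('b \<Rightarrow> 'a::euclidean_space) \<Rightarrow> 'a set \<Rightarrow> 'a \<Rightarrow> real \<Rightarrow> real" where
  "misspec_risk M Z C th s = (\<integral>\<omega>. (norm (proj C (th + s *\<^sub>R Z \<omega>) - proj C th))\<^sup>2 \<partial>M)"

definition excess_risk :: "'b measure \<Rightarrow> ('b \<Rightarrow> 'a::euclidean_space) \<Rightarrow> 'a set \<Rightarrow> 'a \<Rightarrow> real \<Rightarrow> real" where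
  "excess_risk M Z C th s = (\<integral>\<omega>. (norm (proj C (th + s *\<^sub>R Z \<omega>) - th))\<^sup>2 \<partial>M)
       - (norm (proj C th - th))\<^sup>2"

end

theory Submission imports Defs begin

lemma closest_point_via_dot:
  fixes S :: "'a::euclidean_space set"
  assumes "convex S" "closed S" "x \<in> S" "\<And>c. c \<in> S \<Longrightarrow> inner (a - x) (c - x) \<le> 0"
  shows "closest_point S a = x"
proof -
  have "dist a x \<le> dist a z" if "z \<in> S" for z
  proof -
    have h: "inner (a - x) (z - x) \<le> 0" using assms(4) that by blast
    have "(dist a z)\<^sup>2 = (norm ((a - x) - (z - x)))\<^sup>2" by (simp add: dist_norm)
    also have "\<dots> = (norm (a - x))\<^sup>2 - 2 * inner (a - x) (z - x) + (norm (z - x))\<^sup>2"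
      by (simp add: power2_norm_eq_inner inner_diff inner_commute)
    finally have "(dist a x)\<^sup>2 \<le> (dist a z)\<^sup>2" using h
      by (simp add: dist_norm) (smt (verit) zero_le_power2)
    then show ?thesis by (simp add: power2_le_iff_abs_le)
  qed
  then show ?thesis using closest_point_unique[OF assms(1-3)] by (metis)
qed

lemma polar_key:
  fixes rows :: "'a::euclidean_space list" and T :: "'a set"
  assumes T: "T = {x. \<forall>a\<in>set rows. inner a x \<le> 0}"
    and v: "\<And>u. u \<in> T \<Longrightarrow> inner v u \<le> 0"
    and w: "\<And>k. k \<in> T \<Longrightarrow> inner k v = 0 \<Longrightarrow> inner w k \<le> 0"
  shows "\<exists>\<mu>\<ge>0. \<forall>u\<in>T. inner (w + \<mu> *\<^sub>R v) u \<le> 0"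
proof -
  define G where "G = insert (- v) (set rows)"
  define Q where "Q = conic hull (convex hull G)"
  define P where "P = {q. \<exists>\<mu>\<ge>0. \<forall>u\<in>T. inner (q + \<mu> *\<^sub>R v) u \<le> 0}"
  have polyQ: "polytope (convex hull G)" unfolding polytope_def G_def by auto
  have closedQ: "closed Q" unfolding Q_def using closed_conic_hull_strong polyQ by blast
  have convexQ: "convex Q" unfolding Q_def by (simp add: convex_conic_hull)
  have conicQ: "conic Q" unfolding Q_def by (simp add: conic_conic_hull)
  have GQ: "G \<subseteq> Q" unfolding Q_def
    by (meson hull_subset subset_trans)
  have wQ: "w \<in> Q"
  proof (rule ccontr)
    assume "w \<notin> Q"
    then obtain a b where ab: "inner a w < b" "\<forall>x\<in>Q. inner a x > b"
      using separating_hyperplane_closed_point[OF convexQ closedQ] by blast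
    have "0 \<in> Q" using conicQ GQ G_def conic_contains_0 by fastforce
    then have b0: "b < 0" using ab by auto
    have pos: "inner a x \<ge> 0" if "x \<in> Q" for x
    proof (rule ccontr)
      assume "\<not> inner a x \<ge> 0"
      then have neg: "inner a x < 0" by simp
      define c where "c = b / inner a x"
      have c0: "c \<ge> 0" using neg b0 unfolding c_def by (simp add: divide_nonpos_neg)
      have "c *\<^sub>R x \<in> Q" using conicQ that c0 by (simp add: conicD)
      then have "inner a (c *\<^sub>R x) > b" using ab by blast
      moreover have "inner a (c *\<^sub>R x) = b" unfolding c_def using neg by simp
      ultimately show False by simp
    qed
    define x where "x = - a"
    have xT: "x \<in> T" unfolding T x_def
    proof (clarify)
      fix r assume "r \<in> set rows"
      then have "r \<in> Q" using GQ G_def by auto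
      then have "inner a r \<ge> 0" using pos by blast
      then show "inner r (- a) \<le> 0" by (simp add: inner_commute)
    qed
    have "- v \<in> Q" using GQ G_def by auto
    then have "inner a (- v) \<ge> 0" using pos by blast
    then have "inner x v \<ge> 0" unfolding x_def by simp
    moreover have "inner v x \<le> 0" using v xT by blast
    ultimately have "inner x v = 0" by (simp add: inner_commute)
    then have "inner w x \<le> 0" using w xT by blast
    then have "inner a w \<ge> 0" unfolding x_def by (simp add: inner_commute)
    then show False using ab b0 by simp
  qed
  have convexP: "convex P" unfolding convex_def P_def
  proof (clarify)
    fix q1 q2 :: 'a and m1 m2 v1 v2 :: real
    assume *: "\<forall>u\<in>T. inner (q1 + m1 *\<^sub>R v) u \<le> 0" "0 \<le> m1"
      "\<forall>u\<in>T. inner (q2 + m2 *\<^sub>R v) u \<le> 0" "0 \<le> m2" "0 \<le> v1" "0 \<le> v2" "v1 + v2 = 1"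
    show "\<exists>\<mu>\<ge>0. \<forall>u\<in>T. inner (v1 *\<^sub>R q1 + v2 *\<^sub>R q2 + \<mu> *\<^sub>R v) u \<le> 0"
    proof (intro exI[of _ "v1 * m1 + v2 * m2"] conjI ballI)
      show "0 \<le> v1 * m1 + v2 * m2" using * by simp
      fix u assume "u \<in> T"
      then have a: "inner (q1 + m1 *\<^sub>R v) u \<le> 0" "inner (q2 + m2 *\<^sub>R v) u \<le> 0" using * by auto
      have "inner (v1 *\<^sub>R q1 + v2 *\<^sub>R q2 + (v1 * m1 + v2 * m2) *\<^sub>R v) u
          = v1 * inner (q1 + m1 *\<^sub>R v) u + v2 * inner (q2 + m2 *\<^sub>R v) u"
        by (simp add: inner_add_left algebra_simps)
      also have "\<dots> \<le> 0" using a * by (simp add: add_nonpos_nonpos mult_nonneg_nonpos)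
      finally show "inner (v1 *\<^sub>R q1 + v2 *\<^sub>R q2 + (v1 * m1 + v2 * m2) *\<^sub>R v) u \<le> 0" .
    qed
  qed
  have conicP: "conic P" unfolding conic_def P_def
  proof (clarify)
    fix q c m
    assume *: "\<forall>u\<in>T. inner (q + m *\<^sub>R v) u \<le> 0" "0 \<le> m" "0 \<le> (c::real)"
    show "\<exists>\<mu>\<ge>0. \<forall>u\<in>T. inner (c *\<^sub>R q + \<mu> *\<^sub>R v) u \<le> 0"
    proof (intro exI[of _ "c * m"] conjI ballI)
      show "0 \<le> c * m" using * by simp
      fix u assume "u \<in> T"
      then have "inner (q + m *\<^sub>R v) u \<le> 0" using * by auto
      moreover have "inner (c *\<^sub>R q + (c * m) *\<^sub>R v) u = c * inner (q + m *\<^sub>R v) u"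
        by (simp add: inner_add_left algebra_simps)
      ultimately show "inner (c *\<^sub>R q + (c * m) *\<^sub>R v) u \<le> 0" using * by (simp add: mult_nonneg_nonpos)
    qed
  qed
  have GP: "G \<subseteq> P"
  proof
    fix g assume "g \<in> G"
    then consider "g = - v" | "g \<in> set rows" unfolding G_def by auto
    then show "g \<in> P"
    proof cases
      case 1 then show ?thesis unfolding P_def by (intro CollectI exI[of _ 1]) simp
    next
      case 2 then show ?thesis unfolding P_def T by (intro CollectI exI[of _ 0]) auto
    qed
  qed
  have "convex hull G \<subseteq> P" using GP convexP by (simp add: hull_minimal)
  then have "Q \<subseteq> P" unfolding Q_def using conicP by (simp add: hull_minimal)
  then show ?thesis using wQ unfolding P_def by blast
qed


lemma dom_at_right:
  fixes g :: "real \<Rightarrow> 'b \<Rightarrow> real" and f w :: "'b \<Rightarrow> real"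
  assumes "f \<in> borel_measurable M" "\<And>t. g t \<in> borel_measurable M" "integrable M w"
    "\<And>x. x \<in> space M \<Longrightarrow> ((\<lambda>t. g t x) \<longlongrightarrow> f x) (at_right 0)"
    "\<And>t x. t > 0 \<Longrightarrow> x \<in> space M \<Longrightarrow> norm (g t x) \<le> w x"
  shows "((\<lambda>t. integral\<^sup>L M (g t)) \<longlongrightarrow> integral\<^sup>L M f) (at_right 0)"
proof (rule tendsto_at_right_sequentially[of 0 1])
  show "(0::real) < 1" by simp
  fix S :: "nat \<Rightarrow> real" assume S: "\<And>n. 0 < S n" "\<And>n. S n < 1" "decseq S" "S \<longlonglongrightarrow> 0"
  have Sf: "filterlim S (at_right 0) sequentially"
    using S by (intro tendsto_imp_filterlim_at_right) (auto intro: always_eventually)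
  show "(\<lambda>n. integral\<^sup>L M (g (S n))) \<longlonglongrightarrow> integral\<^sup>L M f"
  proof (rule integral_dominated_convergence[where w=w])
    show "AE x in M. (\<lambda>i. g (S i) x) \<longlonglongrightarrow> f x"
      using assms(4) by (intro AE_I2 filterlim_compose[OF _ Sf]) auto
    show "AE x in M. norm (g (S i) x) \<le> w x" for i
      using assms(5) S(1) by (intro AE_I2) auto
  qed (use assms in auto)
qed

theorem theorem1:
  fixes C :: "(real ^ 'n) set" and th :: "real ^ 'n"
    and M :: "'b measure" and Z :: "'b \<Rightarrow> real ^ 'n" and rstar :: real
  assumes "C \<noteq> {}" and "closed C" and "convex C"
    and "prob_space M"
    and "Z \<in> borel_measurable M"
    and "integrable M Z" and "(\<integral>\<omega>. Z \<omega> \<partial>M) = 0"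
    and "integrable M (\<lambda>\<omega>. (norm (Z \<omega>))\<^sup>2)"
    and "polyhedral_cone (tangent_cone C (proj C th))"
    and "rstar > 0"
    and "tangent_cone C (proj C th) \<inter> cball 0 rstar
           = feasible_dirs C (proj C th) \<inter> cball 0 rstar"
  shows "((\<lambda>s. misspec_risk M Z C th s / s\<^sup>2) \<longlongrightarrow>
            stat_dim M Z (tangent_cone C (proj C th) \<inter> orth (th - proj C th))) (at_right 0) \<and>
         ((\<lambda>s. excess_risk M Z C th s / s\<^sup>2) \<longlongrightarrow>
            stat_dim M Z (tangent_cone C (proj C th) \<inter> orth (th - proj C th))) (at_right 0)"
proof -
  note CC = assms(3,2,1)
  define t0 where "t0 = proj C th"
  define v where "v = th - t0"
  define T where "T = tangent_cone C t0"
  define K where "K = T \<inter> orth v"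
  have t0C: "t0 \<in> C" unfolding t0_def using closest_point_in_set assms by blast
  obtain rows where rows: "T = {x. \<forall>a\<in>set rows. inner a x \<le> 0}"
    using assms(9) unfolding polyhedral_cone_def T_def t0_def by blast
  have closedT: "closed T" unfolding rows
    by (simp add: Collect_ball_eq closed_INT closed_halfspace_le)
  have convexT: "convex T" unfolding rows
    by (simp add: Collect_ball_eq convex_INT convex_halfspace_le)
  have coneT: "c *\<^sub>R x \<in> T" if "x \<in> T" "c \<ge> 0" for x c
    using that unfolding rows by (auto simp: mult_nonneg_nonpos)
  have zeroT: "0 \<in> T" unfolding rows by simp
  have vT: "inner v u \<le> 0" if "u \<in> T" for u
  proof -
    have "{a *\<^sub>R (t - t0) | a t. a \<ge> 0 \<and> t \<in> C} \<subseteq> {u. inner v u \<le> 0}"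
    proof clarify
      fix a :: real and t assume "a \<ge> 0" "t \<in> C"
      then have "inner (th - t0) (t - t0) \<le> 0" unfolding t0_def using closest_point_dot CC by blast
      then show "inner v (a *\<^sub>R (t - t0)) \<le> 0" unfolding v_def using \<open>a \<ge> 0\<close>
        by (simp add: mult_nonneg_nonpos)
    qed
    then have "T \<subseteq> {u. inner v u \<le> 0}" unfolding T_def tangent_cone_def
      by (intro closure_minimal) (auto simp: closed_halfspace_le)
    then show ?thesis using that by blast
  qed
  have FT: "t - t0 \<in> T" if "t \<in> C" for t
  proof -
    have "t - t0 \<in> {a *\<^sub>R (t - t0) | a t. a \<ge> 0 \<and> t \<in> C}"
      by (intro CollectI exI[of _ "1::real"] exI[of _ t]) (simp add: that)
    then show ?thesis unfolding T_def tangent_cone_def by (meson closure_subset subsetD)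
  qed
  have TF: "\<exists>t\<in>C. d = t - t0" if "d \<in> T" "norm d \<le> rstar" for d
  proof -
    have "d \<in> tangent_cone C (proj C th) \<inter> cball 0 rstar"
      using that unfolding T_def t0_def by (simp add: dist_norm)
    then have "d \<in> feasible_dirs C t0" using assms(11) unfolding t0_def by blast
    then show ?thesis unfolding feasible_dirs_def by blast
  qed
  have orthE: "orth v = {x. inner v x = 0}" unfolding orth_def
    by (metis (mono_tags, opaque_lifting) inner_commute)
  have closedK: "closed K" unfolding K_def orthE
    by (rule closed_Int[OF closedT closed_hyperplane])
  have convexK: "convex K" unfolding K_def orthE
    by (rule convex_Int[OF convexT convex_hyperplane])
  have zeroK: "0 \<in> K" unfolding K_def orth_def using zeroT by simp
  have KCC: "convex K" "closed K" "K \<noteq> {}" using convexK closedK zeroK by auto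
  have local: "\<forall>\<^sub>F s in at_right 0. proj C (th + s *\<^sub>R z) = t0 + s *\<^sub>R proj K z" for z
  proof -
    define p where "p = proj K z"
    have pK: "p \<in> K" unfolding p_def using closest_point_in_set KCC(2,3) by blast
    have dot: "inner (z - p) (k - p) \<le> 0" if "k \<in> K" for k
      unfolding p_def using closest_point_dot KCC that by blast
    have pT: "p \<in> T" and pv: "inner p v = 0" using pK unfolding K_def orth_def by auto
    have "2 *\<^sub>R p \<in> K" using pK coneT[of p 2] unfolding K_def orth_def by auto
    then have "inner (z - p) p \<le> 0" using dot[of "2 *\<^sub>R p"] by (simp add: algebra_simps)
    moreover have "inner (z - p) (- p) \<le> 0" using dot[OF zeroK] by simp
    ultimately have zpp: "inner (z - p) p = 0" by simp
    have wK: "inner (z - p) k \<le> 0" if "k \<in> T" "inner k v = 0" for k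
    proof -
      have "k \<in> K" using that unfolding K_def orth_def by auto
      then have "inner (z - p) (k - p) \<le> 0" by (rule dot)
      then show ?thesis using zpp by (simp add: inner_diff_right)
    qed
    obtain \<mu> where mu: "\<mu> \<ge> 0" "\<And>u. u \<in> T \<Longrightarrow> inner ((z - p) + \<mu> *\<^sub>R v) u \<le> 0"
      using polar_key[OF rows vT wK] by blast
    define b where "b = min (rstar / (norm p + 1)) (1 / (\<mu> + 1))"
    have np: "norm p + 1 > 0" by (simp add: add_nonneg_pos)
    have mu1: "\<mu> + 1 > 0" using mu(1) by simp
    have b0: "b > 0" unfolding b_def using assms(10) np mu1 by simp
    have "proj C (th + s *\<^sub>R z) = t0 + s *\<^sub>R p" if s: "s > 0" "s < b" for s
    proof (rule closest_point_via_dot[OF CC(1,2)])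
      have "s < rstar / (norm p + 1)" using s unfolding b_def by simp
      then have "s * (norm p + 1) < rstar" using np by (simp add: pos_less_divide_eq)
      then have "norm (s *\<^sub>R p) \<le> rstar" using s by (simp add: algebra_simps)
      moreover have "s *\<^sub>R p \<in> T" using coneT pT s by simp
      ultimately obtain t where "t \<in> C" "s *\<^sub>R p = t - t0" using TF by blast
      then show "t0 + s *\<^sub>R p \<in> C" by simp
      have smu: "s * \<mu> \<le> 1"
      proof -
        have "s < 1 / (\<mu> + 1)" using s unfolding b_def by simp
        then have "s * (\<mu> + 1) < 1" using mu1 by (simp add: pos_less_divide_eq)
        then show ?thesis using s by (simp add: algebra_simps)
      qed
      fix c assume "c \<in> C"
      then have cT: "c - t0 \<in> T" by (rule FT)
      have eq: "th + s *\<^sub>R z - (t0 + s *\<^sub>R p) = (1 - s * \<mu>) *\<^sub>R v + s *\<^sub>R ((z - p) + \<mu> *\<^sub>R v)"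
        unfolding v_def by (simp add: algebra_simps)
      have "inner (th + s *\<^sub>R z - (t0 + s *\<^sub>R p)) (c - (t0 + s *\<^sub>R p))
          = inner (th + s *\<^sub>R z - (t0 + s *\<^sub>R p)) (c - t0) - s * inner (v + s *\<^sub>R (z - p)) p"
        unfolding v_def by (simp add: inner_diff_right algebra_simps)
      also have "inner (v + s *\<^sub>R (z - p)) p = 0"
      proof -
        have "inner v p = 0" using pv by (metis inner_commute)
        then show ?thesis using zpp by (simp add: inner_add_left)
      qed
      also have "inner (th + s *\<^sub>R z - (t0 + s *\<^sub>R p)) (c - t0)
          = (1 - s * \<mu>) * inner v (c - t0) + s * inner ((z - p) + \<mu> *\<^sub>R v) (c - t0)"
        unfolding eq by (simp add: inner_add_left)
      also have "\<dots> \<le> 0" using vT[OF cT] mu(2)[OF cT] smu s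
        by (intro add_nonpos_nonpos mult_nonneg_nonpos) auto
      finally show "inner (th + s *\<^sub>R z - (t0 + s *\<^sub>R p)) (c - (t0 + s *\<^sub>R p)) \<le> 0" by simp
    qed
    then show ?thesis unfolding eventually_at_right_field p_def using b0 by blast
  qed
  interpret PS: prob_space M by (rule assms(4))
  define D where "D s \<omega> = proj C (th + s *\<^sub>R Z \<omega>) - t0" for s \<omega>
  define PK where "PK \<omega> = proj K (Z \<omega>)" for \<omega>
  have cC: "continuous_on UNIV (closest_point C)"
    using continuous_on_closest_point CC by blast
  have cK: "continuous_on UNIV (closest_point K)"
    using continuous_on_closest_point KCC by blast
  have measY: "(\<lambda>\<omega>. th + s *\<^sub>R Z \<omega>) \<in> borel_measurable M" for s
    using assms(5) by measurable
  have measD: "D s \<in> borel_measurable M" for s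
    unfolding D_def using borel_measurable_continuous_on[OF cC measY] by measurable
  have measPK: "PK \<in> borel_measurable M"
    unfolding PK_def using borel_measurable_continuous_on[OF cK assms(5)] .
  have bound1: "norm (D s \<omega>) \<le> s * norm (Z \<omega>)" if "s > 0" for s \<omega>
  proof -
    have "dist (proj C (th + s *\<^sub>R Z \<omega>)) (proj C th) \<le> dist (th + s *\<^sub>R Z \<omega>) th"
      using closest_point_lipschitz CC by blast
    then show ?thesis using that unfolding D_def t0_def by (simp add: dist_norm)
  qed
  have bound2: "\<bar>inner (D s \<omega>) v\<bar> \<le> s\<^sup>2 * (norm (Z \<omega>))\<^sup>2" if "s > 0" for s \<omega>
  proof -
    define P where "P = proj C (th + s *\<^sub>R Z \<omega>)"
    have PC: "P \<in> C" unfolding P_def using closest_point_in_set CC by blast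
    have a: "inner (th - t0) (P - t0) \<le> 0" unfolding t0_def using closest_point_dot CC PC by blast
    have b: "inner (th + s *\<^sub>R Z \<omega> - P) (t0 - P) \<le> 0"
      unfolding P_def using closest_point_dot CC t0C by blast
    have Deq: "D s \<omega> = P - t0" unfolding D_def P_def by simp
    have Yeq: "th + s *\<^sub>R Z \<omega> - P = v + s *\<^sub>R Z \<omega> - D s \<omega>" unfolding Deq v_def by simp
    have tPeq: "t0 - P = - D s \<omega>" unfolding Deq by simp
    have "inner (v + s *\<^sub>R Z \<omega> - D s \<omega>) (- D s \<omega>) \<le> 0" using b unfolding Yeq tPeq .
    moreover have "inner (v + s *\<^sub>R Z \<omega> - D s \<omega>) (- D s \<omega>)
        = - inner (D s \<omega>) v - s * inner (Z \<omega>) (D s \<omega>) + (norm (D s \<omega>))\<^sup>2"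
      by (simp add: inner_diff_left inner_add_left power2_norm_eq_inner inner_commute[of v])
    ultimately have b2: "- inner (D s \<omega>) v \<le> s * inner (Z \<omega>) (D s \<omega>) - (norm (D s \<omega>))\<^sup>2"
      by linarith
    have a2: "inner (D s \<omega>) v \<le> 0" using a unfolding Deq v_def by (simp add: inner_commute)
    have "s * inner (Z \<omega>) (D s \<omega>) \<le> s * (norm (Z \<omega>) * norm (D s \<omega>))"
      using that Cauchy_Schwarz_ineq2[of "Z \<omega>" "D s \<omega>"] by (intro mult_left_mono) auto
    also have "\<dots> \<le> s * (norm (Z \<omega>) * (s * norm (Z \<omega>)))"
      using that bound1[OF that, of \<omega>] by (intro mult_left_mono) auto
    also have "\<dots> = s\<^sup>2 * (norm (Z \<omega>))\<^sup>2" by (simp add: power2_eq_square)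
    finally have "s * inner (Z \<omega>) (D s \<omega>) \<le> s\<^sup>2 * (norm (Z \<omega>))\<^sup>2" .
    moreover have "(norm (D s \<omega>))\<^sup>2 \<ge> 0" by simp
    ultimately show ?thesis using a2 b2 by arith
  qed
  have sq1: "(norm (D s \<omega>))\<^sup>2 / s\<^sup>2 \<le> (norm (Z \<omega>))\<^sup>2" if "s > 0" for s \<omega>
  proof -
    have "(norm (D s \<omega>))\<^sup>2 \<le> (s * norm (Z \<omega>))\<^sup>2"
      using bound1[OF that] by (intro power_mono) auto
    then show ?thesis using that by (simp add: divide_le_eq power_mult_distrib algebra_simps)
  qed
  have sq2: "\<bar>inner (D s \<omega>) v\<bar> / s\<^sup>2 \<le> (norm (Z \<omega>))\<^sup>2" if "s > 0" for s \<omega>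
    using bound2[OF that] that by (simp add: divide_le_eq algebra_simps)
  have ptw: "\<forall>\<^sub>F s in at_right 0. D s \<omega> = s *\<^sub>R PK \<omega>" for \<omega>
    using local[of "Z \<omega>"] unfolding D_def PK_def by (rule eventually_mono) simp
  have PKv: "inner (PK \<omega>) v = 0" for \<omega>
  proof -
    have "PK \<omega> \<in> K" unfolding PK_def using closest_point_in_set KCC(2,3) by blast
    then show ?thesis unfolding K_def orth_def by simp
  qed
  have sd: "stat_dim M Z (tangent_cone C (proj C th) \<inter> orth (th - proj C th))
      = (\<integral>\<omega>. (norm (PK \<omega>))\<^sup>2 \<partial>M)"
    unfolding stat_dim_def PK_def K_def T_def v_def t0_def ..
  have intZ: "integrable M (\<lambda>\<omega>. 3 * (norm (Z \<omega>))\<^sup>2)" using assms(8) by simp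
  have L1: "((\<lambda>s. \<integral>\<omega>. (norm (D s \<omega>))\<^sup>2 / s\<^sup>2 \<partial>M) \<longlongrightarrow> (\<integral>\<omega>. (norm (PK \<omega>))\<^sup>2 \<partial>M)) (at_right 0)"
  proof (rule dom_at_right[where w="\<lambda>\<omega>. (norm (Z \<omega>))\<^sup>2"])
    show "(\<lambda>\<omega>. (norm (PK \<omega>))\<^sup>2) \<in> borel_measurable M" using measPK by measurable
    show "(\<lambda>\<omega>. (norm (D s \<omega>))\<^sup>2 / s\<^sup>2) \<in> borel_measurable M" for s using measD[of s] by measurable
    show "integrable M (\<lambda>\<omega>. (norm (Z \<omega>))\<^sup>2)" by (rule assms(8))
    show "norm ((norm (D s \<omega>))\<^sup>2 / s\<^sup>2) \<le> (norm (Z \<omega>))\<^sup>2" if "s > 0" for s \<omega>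
      using sq1[OF that] by simp
    show "((\<lambda>s. (norm (D s \<omega>))\<^sup>2 / s\<^sup>2) \<longlongrightarrow> (norm (PK \<omega>))\<^sup>2) (at_right 0)" for \<omega>
    proof (rule tendsto_eventually)
      show "\<forall>\<^sub>F s in at_right 0. (norm (D s \<omega>))\<^sup>2 / s\<^sup>2 = (norm (PK \<omega>))\<^sup>2"
        using ptw[of \<omega>] eventually_at_right_less[of 0]
      proof eventually_elim
        case (elim s)
        then show ?case by (simp add: power_mult_distrib)
      qed
    qed
  qed
  have E1: "\<forall>\<^sub>F s in at_right 0. misspec_risk M Z C th s / s\<^sup>2 = (\<integral>\<omega>. (norm (D s \<omega>))\<^sup>2 / s\<^sup>2 \<partial>M)"
    by (intro always_eventually allI) (simp add: misspec_risk_def D_def t0_def)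
  define h where "h s \<omega> = (norm (D s \<omega>))\<^sup>2 - 2 * inner (D s \<omega>) v" for s \<omega>
  have measH: "h s \<in> borel_measurable M" for s
    unfolding h_def using measD[of s] by measurable
  have L2: "((\<lambda>s. \<integral>\<omega>. h s \<omega> / s\<^sup>2 \<partial>M) \<longlongrightarrow> (\<integral>\<omega>. (norm (PK \<omega>))\<^sup>2 \<partial>M)) (at_right 0)"
  proof (rule dom_at_right[where w="\<lambda>\<omega>. 3 * (norm (Z \<omega>))\<^sup>2"])
    show "(\<lambda>\<omega>. (norm (PK \<omega>))\<^sup>2) \<in> borel_measurable M" using measPK by measurable
    show "(\<lambda>\<omega>. h s \<omega> / s\<^sup>2) \<in> borel_measurable M" for s using measH[of s] by measurable
    show "integrable M (\<lambda>\<omega>. 3 * (norm (Z \<omega>))\<^sup>2)" by (rule intZ)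
    show "norm (h s \<omega> / s\<^sup>2) \<le> 3 * (norm (Z \<omega>))\<^sup>2" if "s > 0" for s \<omega>
    proof -
      have hh: "h s \<omega> / s\<^sup>2 = (norm (D s \<omega>))\<^sup>2 / s\<^sup>2 - 2 * (inner (D s \<omega>) v / s\<^sup>2)"
        unfolding h_def by (simp add: diff_divide_distrib)
      have ab: "\<bar>inner (D s \<omega>) v / s\<^sup>2\<bar> = \<bar>inner (D s \<omega>) v\<bar> / s\<^sup>2" by simp
      have nn: "(norm (D s \<omega>))\<^sup>2 / s\<^sup>2 \<ge> 0" by simp
      have "norm (h s \<omega> / s\<^sup>2) \<le> (norm (D s \<omega>))\<^sup>2 / s\<^sup>2 + 2 * (\<bar>inner (D s \<omega>) v\<bar> / s\<^sup>2)"
        unfolding real_norm_def hh using ab nn by arith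
      then show ?thesis using sq1[OF that, of \<omega>] sq2[OF that, of \<omega>] by simp
    qed
    show "((\<lambda>s. h s \<omega> / s\<^sup>2) \<longlongrightarrow> (norm (PK \<omega>))\<^sup>2) (at_right 0)" for \<omega>
    proof (rule tendsto_eventually)
      show "\<forall>\<^sub>F s in at_right 0. h s \<omega> / s\<^sup>2 = (norm (PK \<omega>))\<^sup>2"
        using ptw[of \<omega>] eventually_at_right_less[of 0]
      proof eventually_elim
        case (elim s)
        then show ?case unfolding h_def using PKv[of \<omega>] by (simp add: power_mult_distrib)
      qed
    qed
  qed
  have E2: "\<forall>\<^sub>F s in at_right 0. excess_risk M Z C th s / s\<^sup>2 = (\<integral>\<omega>. h s \<omega> / s\<^sup>2 \<partial>M)"
    using eventually_at_right_less[of 0]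
  proof eventually_elim
    case (elim s)
    then have True: "s > 0" by simp
    have pt: "(norm (proj C (th + s *\<^sub>R Z \<omega>) - th))\<^sup>2 = h s \<omega> + (norm (proj C th - th))\<^sup>2" for \<omega>
    proof -
      have e1: "proj C (th + s *\<^sub>R Z \<omega>) - th = D s \<omega> - v" unfolding D_def v_def by simp
      have e2: "proj C th - th = - v" unfolding v_def t0_def by simp
      show ?thesis unfolding e1 e2 h_def
        by (simp add: power2_norm_eq_inner inner_diff_left inner_diff_right inner_commute)
    qed
    have intH: "integrable M (h s)"
    proof (rule Bochner_Integration.integrable_bound[OF _ measH])
      show "integrable M (\<lambda>\<omega>. (3 * s\<^sup>2 + 1) * (norm (Z \<omega>))\<^sup>2)" using assms(8) by simp
      show "AE \<omega> in M. norm (h s \<omega>) \<le> norm ((3 * s\<^sup>2 + 1) * (norm (Z \<omega>))\<^sup>2)"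
      proof (rule AE_I2)
        fix \<omega>
        show "norm (h s \<omega>) \<le> norm ((3 * s\<^sup>2 + 1) * (norm (Z \<omega>))\<^sup>2)"
        proof -
          have "(norm (D s \<omega>))\<^sup>2 \<le> s\<^sup>2 * (norm (Z \<omega>))\<^sup>2"
            using sq1[OF True, of \<omega>] True by (simp add: divide_le_eq mult.commute)
          moreover have "(norm (D s \<omega>))\<^sup>2 \<ge> 0" "s\<^sup>2 * (norm (Z \<omega>))\<^sup>2 \<ge> 0" by simp_all
          moreover have "norm ((3 * s\<^sup>2 + 1) * (norm (Z \<omega>))\<^sup>2) = 3 * (s\<^sup>2 * (norm (Z \<omega>))\<^sup>2) + (norm (Z \<omega>))\<^sup>2"
            by (simp add: algebra_simps)
          moreover have "(norm (Z \<omega>))\<^sup>2 \<ge> 0" by simp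
          ultimately show ?thesis unfolding h_def real_norm_def using bound2[OF True, of \<omega>]
            by arith
        qed
      qed
    qed
    show ?case
      unfolding excess_risk_def pt using intH
      by (simp add: PS.prob_space)
  qed
  show ?thesis
    unfolding sd using tendsto_cong[OF E1] tendsto_cong[OF E2] L1 L2 by simp
qed

end
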